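(* Let $\Upsilon$ be a Coxeter graph and $W=W(\Upsilon)$ the associated Coxeter group, and suppose the abelianization of $W$ is $\mathbb{Z}_2$. Then there exists a labeled oriented tree $\Gamma$ of Coxeter type, which can moreover be chosen to be prime, such that $G(\Gamma)$ maps onto $W$.
   Context: A Coxeter graph $\Upsilon$ is a finite simplicial graph with vertex set $\mathbf{x}$ whose edges $e$ carry integer labels $m_e\ge 2$; $W(\Upsilon)=\langle \mathbf{x}\mid x^2\ (x\in\mathbf{x}),\ (xy)^{m_e}\text{ for each edge }e=\{x,y\}\rangle$. A labeled oriented tree (LOT) $\Gamma$ is a finite tree with vertex set $\mathbf{x}$ whose edges are oriented and each edge is labeled by a (possibly empty) word $w$ in $\mathbf{x}^{\pm1}$; for the edge $e=(x\xrightarrow{w}y)$ from $x$ to $y$ labeled $w$, set $r_e=xw(wy)^{-1}$; $G(\Gamma)=\langle\mathbf{x}\mid r_e,\ e\text{ an edge}\rangle$. $\Gamma$ is of Coxeter type if for every edge $e=(x\xrightarrow{w}y)$ every letter $z\ne x,y$ occurs in $w$ only with even exponents. A subLOT of $\Gamma$ is a subtree $\Gamma'$ such that all letters in the labels of edges of $\Gamma'$ are vertices of $\Gamma'$; $\Gamma$ is prime if it has no subLOT other than $\Gamma$ itself and single vertices. *)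

theory Defs
  imports "HOL-Algebra.Algebra"
begin

text \<open>A word over a generating set is a list of syllables (z, k), standing for z^k
  (k an integer exponent).\<close>
type_synonym 'x word = "('x \<times> int) list"

definition words :: "'x set \<Rightarrow> 'x word set" where
  "words S = {w. fst ` set w \<subseteq> S}"

definition inv_word :: "'x word \<Rightarrow> 'x word" where
  "inv_word w = rev (map (\<lambda>(z, k). (z, - k)) w)"

text \<open>The congruence on words over S generated by the relators R (together with the
  free-group rules for syllables): two words are equivalent iff they represent the same
  element of the group with presentation (S | R).\<close>
inductive_set pres_cong :: "'x set \<Rightarrow> 'x word set \<Rightarrow> ('x word \<times> 'x word) set"
  for S :: "'x set" and R :: "'x word set" where
  refl: "w \<in> words S \<Longrightarrow> (w, w) \<in> pres_cong S R"
| sym: "(u, v) \<in> pres_cong S R \<Longrightarrow> (v, u) \<in> pres_cong S R"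
| trans: "(u, v) \<in> pres_cong S R \<Longrightarrow> (v, w) \<in> pres_cong S R \<Longrightarrow> (u, w) \<in> pres_cong S R"
| ctxt: "(u, v) \<in> pres_cong S R \<Longrightarrow> a \<in> words S \<Longrightarrow> b \<in> words S
         \<Longrightarrow> (a @ u @ b, a @ v @ b) \<in> pres_cong S R"
| rel: "r \<in> R \<Longrightarrow> r \<in> words S \<Longrightarrow> (r, []) \<in> pres_cong S R"
| merge: "z \<in> S \<Longrightarrow> ([(z, k), (z, l)], [(z, k + l)]) \<in> pres_cong S R"
| zero: "z \<in> S \<Longrightarrow> ([(z, 0)], []) \<in> pres_cong S R"

definition pres_group :: "'x set \<Rightarrow> 'x word set \<Rightarrow> 'x word set monoid" where
  "pres_group S R =
     \<lparr> carrier = words S // pres_cong S R,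
       monoid.mult = (\<lambda>A B. \<Union>a\<in>A. \<Union>b\<in>B. pres_cong S R `` {a @ b}),
       one = pres_cong S R `` {[]} \<rparr>"

definition coxeter_graph :: "'x set \<Rightarrow> 'x set set \<Rightarrow> ('x set \<Rightarrow> nat) \<Rightarrow> bool" where
  "coxeter_graph S E m \<longleftrightarrow> finite S \<and>
     (\<forall>e\<in>E. e \<subseteq> S \<and> card e = 2 \<and> m e \<ge> 2)"

definition coxeter_relators :: "'x set \<Rightarrow> 'x set set \<Rightarrow> ('x set \<Rightarrow> nat) \<Rightarrow> 'x word set" where
  "coxeter_relators S E m =
     {[(x, 2)] | x. x \<in> S} \<union>
     {concat (replicate (m e) [(x, 1), (y, 1)]) | e x y. e \<in> E \<and> e = {x, y}}"

definition coxeter_group :: "'x set \<Rightarrow> 'x set set \<Rightarrow> ('x set \<Rightarrow> nat) \<Rightarrow> 'x word set monoid" where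
  "coxeter_group S E m = pres_group S (coxeter_relators S E m)"

text \<open>A LOT: finite vertex set V and a set of oriented labeled edges (x, w, y),
  meaning x --w--> y.  Vertices are taken to be natural numbers (any finite LOT
  is isomorphic to one of this form).\<close>
type_synonym lot_edge = "nat \<times> nat word \<times> nat"

definition lot_adj :: "lot_edge set \<Rightarrow> (nat \<times> nat) set" where
  "lot_adj Ed = {(x, y) | x w y. (x, w, y) \<in> Ed} \<union> {(y, x) | x w y. (x, w, y) \<in> Ed}"

definition is_tree :: "nat set \<Rightarrow> lot_edge set \<Rightarrow> bool" where
  "is_tree V Ed \<longleftrightarrow> finite V \<and> V \<noteq> {} \<and> finite Ed \<and>
     (\<forall>(x, w, y)\<in>Ed. x \<in> V \<and> y \<in> V \<and> x \<noteq> y) \<and>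
     (\<forall>(x, w, y)\<in>Ed. \<forall>(x', w', y')\<in>Ed. {x, y} = {x', y'} \<longrightarrow> (x, w, y) = (x', w', y')) \<and>
     (\<forall>u\<in>V. \<forall>v\<in>V. (u, v) \<in> (lot_adj Ed)\<^sup>*) \<and>
     card Ed + 1 = card V"

definition is_LOT :: "nat set \<Rightarrow> lot_edge set \<Rightarrow> bool" where
  "is_LOT V Ed \<longleftrightarrow> is_tree V Ed \<and> (\<forall>(x, w, y)\<in>Ed. w \<in> words V)"

definition lot_relator :: "lot_edge \<Rightarrow> nat word" where
  "lot_relator e = (case e of (x, w, y) \<Rightarrow> [(x, 1)] @ w @ inv_word (w @ [(y, 1)]))"

definition lot_group :: "nat set \<Rightarrow> lot_edge set \<Rightarrow> nat word set monoid" where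
  "lot_group V Ed = pres_group V (lot_relator ` Ed)"

definition lot_coxeter_type :: "lot_edge set \<Rightarrow> bool" where
  "lot_coxeter_type Ed \<longleftrightarrow>
     (\<forall>(x, w, y)\<in>Ed. \<forall>(z, k)\<in>set w. z \<noteq> x \<and> z \<noteq> y \<longrightarrow> even k)"

definition induced_edges :: "lot_edge set \<Rightarrow> nat set \<Rightarrow> lot_edge set" where
  "induced_edges Ed V' = {(x, w, y). (x, w, y) \<in> Ed \<and> x \<in> V' \<and> y \<in> V'}"

definition is_subLOT :: "nat set \<Rightarrow> lot_edge set \<Rightarrow> nat set \<Rightarrow> bool" where
  "is_subLOT V Ed V' \<longleftrightarrow> V' \<subseteq> V \<and> is_tree V' (induced_edges Ed V') \<and>
     (\<forall>(x, w, y)\<in>induced_edges Ed V'. w \<in> words V')"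

definition lot_prime :: "nat set \<Rightarrow> lot_edge set \<Rightarrow> bool" where
  "lot_prime V Ed \<longleftrightarrow> (\<forall>V'. is_subLOT V Ed V' \<longrightarrow> V' = V \<or> card V' = 1)"

definition abelianization :: "('a, 'b) monoid_scheme \<Rightarrow> 'a set monoid" where
  "abelianization G = G Mod (derived G (carrier G))"

definition maps_onto :: "('a, 'b) monoid_scheme \<Rightarrow> ('c, 'd) monoid_scheme \<Rightarrow> bool" where
  "maps_onto G H \<longleftrightarrow> (\<exists>h. h \<in> hom G H \<and> h ` carrier G = carrier H)"

end

theory Submission
  imports Defs
begin

lemma pres_cong_words: "(u,v) \<in> pres_cong S R \<Longrightarrow> u \<in> words S \<and> v \<in> words S"
  by (induction rule: pres_cong.induct) (auto simp: words_def)

lemma words_append[simp]: "u @ v \<in> words S \<longleftrightarrow> u \<in> words S \<and> v \<in> words S"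
  by (auto simp: words_def)
lemma words_Cons[simp]: "p # v \<in> words S \<longleftrightarrow> fst p \<in> S \<and> v \<in> words S"
  by (auto simp: words_def)
lemma words_Nil[simp]: "[] \<in> words S" by (simp add: words_def)
lemma inv_word_Nil[simp]: "inv_word [] = []" by (simp add: inv_word_def)
lemma inv_word_Cons[simp]: "inv_word ((z,k)#w) = inv_word w @ [(z,-k)]"
  by (simp add: inv_word_def)
lemma inv_word_append[simp]: "inv_word (u @ v) = inv_word v @ inv_word u"
  by (simp add: inv_word_def)
lemma inv_word_words[simp]: "inv_word w \<in> words S \<longleftrightarrow> w \<in> words S"
  by (induction w) auto
lemma inv_word_inv_word[simp]: "inv_word (inv_word w) = w"
  by (induction w) auto

lemma equiv_pres: "equiv (words S) (pres_cong S R)"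
proof (rule equivI)
  have sub: "p \<in> words S \<times> words S" if "p \<in> pres_cong S R" for p
  proof -
    obtain a b where "p = (a,b)" by fastforce
    then show ?thesis using that pres_cong_words by blast
  qed
  show "refl_on (words S) (pres_cong S R)"
    unfolding refl_on_def using sub pres_cong.refl by blast
  show "pres_cong S R \<subseteq> words S \<times> words S" using sub by blast
  show "sym (pres_cong S R)" unfolding sym_def using pres_cong.sym by blast
  show "trans (pres_cong S R)" unfolding trans_def using pres_cong.trans by blast
qed

lemma pres_cong_app:
  assumes "(u,u') \<in> pres_cong S R" "(v,v') \<in> pres_cong S R"
  shows "(u@v, u'@v') \<in> pres_cong S R"
proof -
  have w: "u \<in> words S" "u' \<in> words S" "v \<in> words S" "v' \<in> words S"
    using assms pres_cong_words by blast+
  have "(u@v, u'@v) \<in> pres_cong S R"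
    using pres_cong.ctxt[OF assms(1), of "[]" v] w by simp
  moreover have "(u'@v, u'@v') \<in> pres_cong S R"
    using pres_cong.ctxt[OF assms(2), of u' "[]"] w by simp
  ultimately show ?thesis using pres_cong.trans by blast
qed

lemma pres_cong_inv: "w \<in> words S \<Longrightarrow> (w @ inv_word w, []) \<in> pres_cong S R"
proof (induction w)
  case Nil then show ?case by (simp add: pres_cong.refl)
next
  case (Cons p w)
  obtain z k where p: "p = (z,k)" by fastforce
  have zS: "z \<in> S" and wS: "w \<in> words S" using Cons.prems p by auto
  have c1: "([(z,k)] @ (w @ inv_word w) @ [(z,-k)], [(z,k)] @ [] @ [(z,-k)]) \<in> pres_cong S R"
    by (rule pres_cong.ctxt) (use Cons.IH wS zS in auto)
  have c2: "([(z,k),(z,-k)], [(z,k + -k)]) \<in> pres_cong S R"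
    by (rule pres_cong.merge[OF zS])
  have c3: "([(z,0)], []) \<in> pres_cong S R" by (rule pres_cong.zero[OF zS])
  have "([(z,k)] @ (w @ inv_word w) @ [(z,-k)], []) \<in> pres_cong S R"
  proof -
    have "k + -k = 0" by simp
    have c1': "([(z,k)] @ (w @ inv_word w) @ [(z,-k)], [(z,k),(z,-k)]) \<in> pres_cong S R"
      using c1 by simp
    have c2': "([(z,k),(z,-k)], [(z,0)]) \<in> pres_cong S R" using c2 by simp
    show ?thesis using pres_cong.trans[OF c1' pres_cong.trans[OF c2' c3]] .
  qed
  then show ?case using p by simp
qed

abbreviation cls :: "'x set \<Rightarrow> 'x word set \<Rightarrow> 'x word \<Rightarrow> 'x word set" where
  "cls S R w \<equiv> pres_cong S R `` {w}"

lemma cls_eq_iff: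
  assumes "u \<in> words S" "v \<in> words S"
  shows "cls S R u = cls S R v \<longleftrightarrow> (u, v) \<in> pres_cong S R"
  using eq_equiv_class_iff[OF equiv_pres assms] by blast

lemma cls_eqI: "(u, v) \<in> pres_cong S R \<Longrightarrow> cls S R u = cls S R v"
  using equiv_class_eq[OF equiv_pres] by blast

lemma carrier_pres: "carrier (pres_group S R) = words S // pres_cong S R"
  by (simp add: pres_group_def)

lemma cls_in_carrier: "w \<in> words S \<Longrightarrow> cls S R w \<in> carrier (pres_group S R)"
  by (simp add: carrier_pres quotientI)

lemma carrier_presE:
  assumes "A \<in> carrier (pres_group S R)"
  obtains a where "a \<in> words S" "A = cls S R a"
  using assms by (auto simp: carrier_pres elim!: quotientE)

lemma one_pres: "\<one>\<^bsub>pres_group S R\<^esub> = cls S R []"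
  by (simp add: pres_group_def)

lemma mult_pres:
  assumes "a \<in> words S" "b \<in> words S"
  shows "cls S R a \<otimes>\<^bsub>pres_group S R\<^esub> cls S R b = cls S R (a @ b)"
proof -
  have eq: "cls S R (a' @ b') = cls S R (a @ b)" if "a' \<in> cls S R a" "b' \<in> cls S R b" for a' b'
  proof (rule cls_eqI, rule pres_cong.sym, rule pres_cong_app)
    show "(a, a') \<in> pres_cong S R" using that(1) by (simp only: Image_singleton_iff)
    show "(b, b') \<in> pres_cong S R" using that(2) by (simp only: Image_singleton_iff)
  qed
  have ha: "a \<in> cls S R a" using pres_cong.refl[OF assms(1)] by (simp only: Image_singleton_iff)
  have hb: "b \<in> cls S R b" using pres_cong.refl[OF assms(2)] by (simp only: Image_singleton_iff)
  have U: "(\<Union>a'\<in>cls S R a. \<Union>b'\<in>cls S R b. cls S R (a' @ b')) = cls S R (a @ b)"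
  proof (rule equalityI)
    show "(\<Union>a'\<in>cls S R a. \<Union>b'\<in>cls S R b. cls S R (a' @ b')) \<subseteq> cls S R (a @ b)"
      using eq by (intro UN_least) (simp only: subset_refl)
    show "cls S R (a @ b) \<subseteq> (\<Union>a'\<in>cls S R a. \<Union>b'\<in>cls S R b. cls S R (a' @ b'))"
    proof
      fix x assume "x \<in> cls S R (a @ b)"
      then show "x \<in> (\<Union>a'\<in>cls S R a. \<Union>b'\<in>cls S R b. cls S R (a' @ b'))"
        by (rule UN_I[OF ha, OF UN_I[OF hb]])
    qed
  qed
  show ?thesis unfolding pres_group_def monoid.select_convs by (rule U)
qed

lemma group_pres: "group (pres_group S R)"
proof (rule groupI)
  fix x y assume x: "x \<in> carrier (pres_group S R)" and y: "y \<in> carrier (pres_group S R)"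
  obtain a where a: "a \<in> words S" "x = cls S R a" using carrier_presE[OF x] .
  obtain b where b: "b \<in> words S" "y = cls S R b" using carrier_presE[OF y] .
  show "x \<otimes>\<^bsub>pres_group S R\<^esub> y \<in> carrier (pres_group S R)"
    using a b by (simp add: mult_pres cls_in_carrier)
next
  show "\<one>\<^bsub>pres_group S R\<^esub> \<in> carrier (pres_group S R)"
    by (simp add: one_pres cls_in_carrier)
next
  fix x y z assume x: "x \<in> carrier (pres_group S R)" and y: "y \<in> carrier (pres_group S R)"
    and z: "z \<in> carrier (pres_group S R)"
  obtain a where a: "a \<in> words S" "x = cls S R a" using carrier_presE[OF x] .
  obtain b where b: "b \<in> words S" "y = cls S R b" using carrier_presE[OF y] .
  obtain c where c: "c \<in> words S" "z = cls S R c" using carrier_presE[OF z] .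
  show "x \<otimes>\<^bsub>pres_group S R\<^esub> y \<otimes>\<^bsub>pres_group S R\<^esub> z =
      x \<otimes>\<^bsub>pres_group S R\<^esub> (y \<otimes>\<^bsub>pres_group S R\<^esub> z)"
    using a b c by (simp add: mult_pres)
next
  fix x assume x: "x \<in> carrier (pres_group S R)"
  obtain a where a: "a \<in> words S" "x = cls S R a" using carrier_presE[OF x] .
  show "\<one>\<^bsub>pres_group S R\<^esub> \<otimes>\<^bsub>pres_group S R\<^esub> x = x"
    using a by (simp add: mult_pres one_pres)
next
  fix x assume x: "x \<in> carrier (pres_group S R)"
  obtain a where a: "a \<in> words S" "x = cls S R a" using carrier_presE[OF x] .
  have "(inv_word a @ inv_word (inv_word a), []) \<in> pres_cong S R"
    by (rule pres_cong_inv) (simp add: a)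
  then have e: "cls S R (inv_word a @ a) = cls S R []"
    by (intro cls_eqI) simp
  have "cls S R (inv_word a) \<otimes>\<^bsub>pres_group S R\<^esub> x = \<one>\<^bsub>pres_group S R\<^esub>"
    using a e by (simp add: mult_pres one_pres)
  moreover have "cls S R (inv_word a) \<in> carrier (pres_group S R)"
    using a by (simp add: cls_in_carrier)
  ultimately show "\<exists>y\<in>carrier (pres_group S R). y \<otimes>\<^bsub>pres_group S R\<^esub> x = \<one>\<^bsub>pres_group S R\<^esub>"
    by blast
qed

fun evalw :: "('g,'b) monoid_scheme \<Rightarrow> ('x \<Rightarrow> 'g) \<Rightarrow> 'x word \<Rightarrow> 'g" where
  "evalw H g [] = \<one>\<^bsub>H\<^esub>"
| "evalw H g (p # w) = (g (fst p) [^]\<^bsub>H\<^esub> (snd p)) \<otimes>\<^bsub>H\<^esub> evalw H g w"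

context group begin

lemma evalw_closed: "g ` S \<subseteq> carrier G \<Longrightarrow> w \<in> words S \<Longrightarrow> evalw G g w \<in> carrier G"
  by (induction w) auto

lemma evalw_append:
  assumes "g ` S \<subseteq> carrier G" "u \<in> words S" "v \<in> words S"
  shows "evalw G g (u @ v) = evalw G g u \<otimes> evalw G g v"
  using assms(2) proof (induction u)
  case Nil then show ?case using evalw_closed[OF assms(1) assms(3)] by simp
next
  case (Cons p u)
  then show ?case using assms evalw_closed[OF assms(1)] by (auto simp: m_assoc)
qed

lemma evalw_inv:
  assumes "g ` S \<subseteq> carrier G" "u \<in> words S"
  shows "evalw G g (inv_word u) = inv (evalw G g u)"
  using assms(2) proof (induction u)
  case Nil then show ?case by simp
next
  case (Cons p u)
  obtain z k where p: "p = (z,k)" by fastforce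
  have z: "g z \<in> carrier G" using Cons.prems p assms(1) by auto
  have u: "u \<in> words S" using Cons.prems by simp
  have zS: "z \<in> S" using Cons.prems p by simp
  have "evalw G g (inv_word (p # u)) = evalw G g (inv_word u) \<otimes> evalw G g [(z,-k)]"
    using p u z zS by (simp add: evalw_append[OF assms(1)])
  also have "\<dots> = inv (evalw G g u) \<otimes> inv (g z [^] k)"
    using Cons.IH u z by (simp add: int_pow_neg)
  also have "\<dots> = inv (g z [^] k \<otimes> evalw G g u)"
    using z evalw_closed[OF assms(1) u] by (simp add: inv_mult_group)
  finally show ?case using p by simp
qed

lemma evalw_replicate:
  assumes "g ` S \<subseteq> carrier G" "u \<in> words S"
  shows "evalw G g (concat (replicate n u)) = evalw G g u [^] n"
proof (induction n)
  case 0 then show ?case by simp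
next
  case (Suc n)
  have w: "concat (replicate n u) \<in> words S" using assms(2) by (induction n) auto
  have "evalw G g (concat (replicate (Suc n) u)) = evalw G g u \<otimes> evalw G g u [^] n"
    using evalw_append[OF assms(1) assms(2) w] Suc by simp
  also have "\<dots> = evalw G g u [^] Suc n"
    by (rule nat_pow_Suc2[symmetric, OF evalw_closed[OF assms]])
  finally show ?case .
qed

lemma evalw_map:
  "evalw G g (map (\<lambda>p. (f (fst p), snd p)) w) = evalw G (g \<circ> f) w"
  by (induction w) auto

lemma evalw_cong_fun:
  "(\<And>z. z \<in> S \<Longrightarrow> g z = g' z) \<Longrightarrow> w \<in> words S \<Longrightarrow> evalw G g w = evalw G g' w"
  by (induction w) auto

lemma evalw_pres_cong:
  assumes g: "g ` S \<subseteq> carrier G"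
    and killed: "\<And>r. r \<in> R \<Longrightarrow> r \<in> words S \<Longrightarrow> evalw G g r = \<one>"
  shows "(u, v) \<in> pres_cong S R \<Longrightarrow> evalw G g u = evalw G g v"
proof (induction rule: pres_cong.induct)
  case (refl w) show ?case by (rule HOL.refl)
next
  case (sym u v) show ?case using sym.IH by (rule HOL.sym)
next
  case (trans u v w) show ?case using trans.IH by (rule HOL.trans)
next
  case (ctxt u v a b)
  have u: "u \<in> words S" and v: "v \<in> words S" using ctxt.hyps(1) pres_cong_words by blast+
  have "evalw G g (a @ u @ b) = evalw G g a \<otimes> (evalw G g u \<otimes> evalw G g b)"
    using u ctxt.hyps by (simp only: evalw_append[OF g] words_append simp_thms)
  also have "\<dots> = evalw G g a \<otimes> (evalw G g v \<otimes> evalw G g b)" by (simp only: ctxt.IH)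
  also have "\<dots> = evalw G g (a @ v @ b)"
    using v ctxt.hyps by (simp only: evalw_append[OF g] words_append simp_thms)
  finally show ?case .
next
  case (rel r) then show ?case using killed by (simp only: evalw.simps)
next
  case (merge z k l)
  then have gz: "g z \<in> carrier G" using g by auto
  show ?case by (simp only: evalw.simps fst_conv snd_conv r_one m_closed int_pow_closed gz int_pow_mult[OF gz])
next
  case (zero z)
  then have gz: "g z \<in> carrier G" using g by auto
  show ?case by (simp only: evalw.simps fst_conv snd_conv int_pow_0 r_one one_closed)
qed

end

lemma pres_univ:
  assumes H: "group H" and g: "g ` S \<subseteq> carrier H"
    and killed: "\<And>r. r \<in> R \<Longrightarrow> r \<in> words S \<Longrightarrow> evalw H g r = \<one>\<^bsub>H\<^esub>"
  shows "\<exists>h \<in> hom (pres_group S R) H. \<forall>a\<in>words S. h (cls S R a) = evalw H g a"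
proof -
  define h where "h A = evalw H g (SOME a. a \<in> A)" for A
  have hc: "h (cls S R a) = evalw H g a" if a: "a \<in> words S" for a
  proof -
    have "a \<in> cls S R a" using a pres_cong.refl by auto
    then have "(SOME a'. a' \<in> cls S R a) \<in> cls S R a" by (rule someI)
    then have pr: "(a, SOME a'. a' \<in> cls S R a) \<in> pres_cong S R" by (simp only: Image_singleton_iff)
    have "evalw H g a = evalw H g (SOME a'. a' \<in> cls S R a)"
      using killed pr by (rule group.evalw_pres_cong[OF H g])
    then show ?thesis unfolding h_def by (simp only: )
  qed
  have "h \<in> hom (pres_group S R) H"
  proof (rule homI)
    fix x assume x: "x \<in> carrier (pres_group S R)"
    obtain a where a: "a \<in> words S" "x = cls S R a" using carrier_presE[OF x] .
    show "h x \<in> carrier H" unfolding a(2) hc[OF a(1)] by (rule group.evalw_closed[OF H g a(1)])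
  next
    fix x y assume x: "x \<in> carrier (pres_group S R)" and y: "y \<in> carrier (pres_group S R)"
    obtain a where a: "a \<in> words S" "x = cls S R a" using carrier_presE[OF x] .
    obtain b where b: "b \<in> words S" "y = cls S R b" using carrier_presE[OF y] .
    show "h (x \<otimes>\<^bsub>pres_group S R\<^esub> y) = h x \<otimes>\<^bsub>H\<^esub> h y"
      unfolding a(2) b(2) mult_pres[OF a(1) b(1)] hc[OF a(1)] hc[OF b(1)]
        hc[OF words_append[THEN iffD2, OF conjI, OF a(1) b(1)]]
      by (rule group.evalw_append[OF H g a(1) b(1)])
  qed
  then show ?thesis using hc by (intro bexI[of _ h] ballI)
qed

lemma pres_gen_pow:
  assumes z: "z \<in> S"
  shows "cls S R [(z,1)] [^]\<^bsub>pres_group S R\<^esub> (k::int) = cls S R [(z,k)]"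
proof -
  interpret P: group "pres_group S R" by (rule group_pres)
  have wz: "[(z, l)] \<in> words S" for l using z by (simp add: words_def)
  have nat: "cls S R [(z,1)] [^]\<^bsub>pres_group S R\<^esub> (n::nat) = cls S R [(z,int n)]" for n
  proof (induction n)
    case 0
    show ?case unfolding nat_pow_0 one_pres of_nat_0
      by (rule cls_eqI, rule pres_cong.sym, rule pres_cong.zero, rule z)
  next
    case (Suc n)
    have "cls S R [(z,1)] [^]\<^bsub>pres_group S R\<^esub> Suc n = cls S R [(z,int n)] \<otimes>\<^bsub>pres_group S R\<^esub> cls S R [(z,1)]"
      unfolding nat_pow_Suc Suc.IH ..
    also have "\<dots> = cls S R ([(z,int n)] @ [(z,1)])" by (rule mult_pres[OF wz wz])
    also have "\<dots> = cls S R [(z,int n + 1)]" unfolding append.simps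
      by (rule cls_eqI, rule pres_cong.merge, rule z)
    finally show ?case unfolding of_nat_Suc by (simp only: add.commute)
  qed
  show ?thesis
  proof (cases "k < 0")
    case False
    then have kk: "int (nat k) = k" by simp
    have "cls S R [(z,1)] [^]\<^bsub>pres_group S R\<^esub> (int (nat k)) = cls S R [(z, int (nat k))]"
      unfolding int_pow_int by (rule nat)
    then show ?thesis unfolding kk .
  next
    case True
    then have kk: "- int (nat (-k)) = k" by simp
    have c: "cls S R [(z, -k)] \<in> carrier (pres_group S R)" "cls S R [(z, k)] \<in> carrier (pres_group S R)"
      by (rule cls_in_carrier[OF wz])+
    have m1: "cls S R [(z, k)] \<otimes>\<^bsub>pres_group S R\<^esub> cls S R [(z, -k)] = cls S R [(z, k), (z, -k)]"
      using mult_pres[OF wz wz, of R k "-k"] by (simp only: append.simps)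
    have m2: "cls S R [(z, k), (z, -k)] = cls S R [(z, 0)]"
      using cls_eqI[OF pres_cong.merge[OF z, of k "-k" R]] by (simp only: add.right_inverse)
    have m3: "cls S R [(z, 0)] = \<one>\<^bsub>pres_group S R\<^esub>"
      unfolding one_pres by (rule cls_eqI, rule pres_cong.zero, rule z)
    have "cls S R [(z, k)] \<otimes>\<^bsub>pres_group S R\<^esub> cls S R [(z, -k)] = \<one>\<^bsub>pres_group S R\<^esub>"
      unfolding m1 m2 m3 ..
    then have iv: "inv\<^bsub>pres_group S R\<^esub> (cls S R [(z, -k)]) = cls S R [(z, k)]"
      using c by (intro P.inv_equality)
    have "cls S R [(z,1)] [^]\<^bsub>pres_group S R\<^esub> (- int (nat (-k))) =
        inv\<^bsub>pres_group S R\<^esub> (cls S R [(z, int (nat (-k)))])"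
      unfolding nat[symmetric] by (rule P.int_pow_neg_int, rule cls_in_carrier[OF wz])
    also have "int (nat (-k)) = -k" using True by simp
    finally show ?thesis unfolding iv minus_minus .
  qed
qed

lemma evalw_gens:
  "w \<in> words S \<Longrightarrow> evalw (pres_group S R) (\<lambda>z. cls S R [(z,1)]) w = cls S R w"
proof (induction w)
  case Nil then show ?case by (simp add: one_pres)
next
  case (Cons p w)
  obtain z k where p: "p = (z,k)" by fastforce
  then have z: "z \<in> S" and w: "w \<in> words S" using Cons.prems by auto
  have "evalw (pres_group S R) (\<lambda>z. cls S R [(z,1)]) (p # w) =
     cls S R [(z,1)] [^]\<^bsub>pres_group S R\<^esub> k \<otimes>\<^bsub>pres_group S R\<^esub> evalw (pres_group S R) (\<lambda>z. cls S R [(z,1)]) w"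
    by (simp add: p)
  also have "\<dots> = cls S R [(z,k)] \<otimes>\<^bsub>pres_group S R\<^esub> cls S R w"
    by (simp only: pres_gen_pow[OF z] Cons.IH[OF w])
  also have "\<dots> = cls S R ([(z,k)] @ w)" by (rule mult_pres) (use z w in auto)
  also have "\<dots> = cls S R (p # w)" using p by simp
  finally show ?case .
qed

definition V4 :: "(bool \<times> bool) monoid" where
  "V4 = \<lparr>carrier = UNIV, monoid.mult = (\<lambda>a b. (fst a \<noteq> fst b, snd a \<noteq> snd b)), one = (False, False)\<rparr>"

lemma V4_simps[simp]: "carrier V4 = UNIV" "a \<otimes>\<^bsub>V4\<^esub> b = (fst a \<noteq> fst b, snd a \<noteq> snd b)"
  "\<one>\<^bsub>V4\<^esub> = (False, False)"
  by (simp_all add: V4_def)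

lemma group_V4: "group V4"
  by (rule groupI) auto

lemma V4_nat_pow: "x [^]\<^bsub>V4\<^esub> (n::nat) = (if even n then (False,False) else x)"
  by (induction n) auto

lemma V4_inv: "inv\<^bsub>V4\<^esub> x = x"
  by (rule group.inv_equality[OF group_V4]) auto

lemma V4_int_pow: "x [^]\<^bsub>V4\<^esub> (k::int) = (if even k then (False,False) else x)"
proof (cases "k < 0")
  case True
  then have "even (nat (-k)) = even k" by (simp add: even_nat_iff)
  then show ?thesis using True by (simp add: int_pow_def2 V4_nat_pow V4_inv)
next
  case False
  then have "even (nat k) = even k" by (simp add: even_nat_iff)
  then show ?thesis using False by (simp add: int_pow_def2 V4_nat_pow)
qed

definition oddrel :: "'x set set \<Rightarrow> ('x set \<Rightarrow> nat) \<Rightarrow> ('x \<times> 'x) set" where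
  "oddrel E m = {(x,y). {x,y} \<in> E \<and> odd (m {x,y})}"

lemma oddrel_sym: "(x,y) \<in> oddrel E m \<Longrightarrow> (y,x) \<in> oddrel E m"
  by (simp add: oddrel_def insert_commute)

lemma odd_connected:
  assumes cg: "coxeter_graph S E m"
    and ab: "abelianization (coxeter_group S E m) \<cong> integer_mod_group 2"
    and x: "x \<in> S" and y: "y \<in> S"
  shows "(x,y) \<in> (oddrel E m)\<^sup>*"
proof (rule ccontr)
  assume nc: "(x,y) \<notin> (oddrel E m)\<^sup>*"
  define R where "R = coxeter_relators S E m"
  define W where "W = pres_group S R"
  have WW: "coxeter_group S E m = W" by (simp add: W_def R_def coxeter_group_def)
  define C where "C = {z. (x,z) \<in> (oddrel E m)\<^sup>*}"
  define g where "g z = (z \<in> C, z \<notin> C)" for z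
  have xC: "x \<in> C" by (simp add: C_def)
  have yC: "y \<notin> C" using nc by (simp add: C_def)
  have Cstep: "s \<in> C \<longleftrightarrow> t \<in> C" if "(s,t) \<in> oddrel E m" for s t
  proof
    assume "s \<in> C" then show "t \<in> C" using that by (simp add: C_def)
  next
    assume "t \<in> C" then show "s \<in> C" using oddrel_sym[OF that] by (simp add: C_def)
  qed
  have gS: "g ` S \<subseteq> carrier V4" by simp
  have killed: "evalw V4 g r = \<one>\<^bsub>V4\<^esub>" if r: "r \<in> R" "r \<in> words S" for r
  proof -
    consider (sq) s where "r = [(s,2)]" | (br) e s t where "e \<in> E" "e = {s,t}"
        "r = concat (replicate (m e) [(s,1),(t,1)])"
      using r(1) unfolding R_def coxeter_relators_def by blast
    then show ?thesis
    proof cases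
      case sq then show ?thesis by (simp add: V4_int_pow)
    next
      case br
      have st: "s \<in> S" "t \<in> S" using br cg unfolding coxeter_graph_def by auto
      have "evalw V4 g r = evalw V4 g [(s,1),(t,1)] [^]\<^bsub>V4\<^esub> (m e)"
        unfolding br(3) by (rule group.evalw_replicate[OF group_V4 gS]) (simp add: st)
      also have "\<dots> = (g s \<otimes>\<^bsub>V4\<^esub> g t) [^]\<^bsub>V4\<^esub> (m e)"
        by (simp add: V4_int_pow)
      also have "\<dots> = \<one>\<^bsub>V4\<^esub>"
      proof (cases "odd (m e)")
        case True
        then have "(s,t) \<in> oddrel E m" using br by (simp add: oddrel_def)
        then have "g s = g t" using Cstep by (simp add: g_def)
        then show ?thesis by (simp add: V4_nat_pow)
      next
        case False
        then show ?thesis by (simp add: V4_nat_pow)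
      qed
      finally show ?thesis .
    qed
  qed
  obtain f where f: "f \<in> hom W V4" and fc: "\<forall>a\<in>words S. f (cls S R a) = evalw V4 g a"
    using pres_univ[OF group_V4 gS, of R] killed unfolding W_def by blast
  have GW: "group W" unfolding W_def by (rule group_pres)
  interpret F: group_hom W V4 f
    by (intro group_hom.intro group_hom_axioms.intro GW group_V4 f)
  have wx: "[(x,1)] \<in> words S" "[(y,1)] \<in> words S" "[(x,1),(y,1)] \<in> words S" "([]::'a word) \<in> words S"
    using x y by (auto simp: words_def)
  have img: "{(False,False),(True,False),(False,True),(True,True)} \<subseteq> f ` carrier W"
  proof -
    have "f (cls S R []) = (False,False)" using fc wx(4) by simp
    moreover have "f (cls S R [(x,1)]) = (True,False)" using fc wx(1) xC by (simp add: V4_int_pow g_def)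
    moreover have "f (cls S R [(y,1)]) = (False,True)" using fc wx(2) yC by (simp add: V4_int_pow g_def)
    moreover have "f (cls S R [(x,1),(y,1)]) = (True,True)" using fc wx(3) xC yC by (simp add: V4_int_pow g_def)
    moreover have "cls S R [] \<in> carrier W" "cls S R [(x,1)] \<in> carrier W"
      "cls S R [(y,1)] \<in> carrier W" "cls S R [(x,1),(y,1)] \<in> carrier W"
      unfolding W_def by (rule cls_in_carrier, rule wx)+
    ultimately show ?thesis by (metis empty_subsetI image_eqI insert_subset)
  qed
  define D where "D = derived W (carrier W)"
  have Dsub: "subgroup D W" unfolding D_def by (rule group.derived_is_subgroup[OF GW]) simp
  have Dker: "D \<subseteq> kernel W V4 f"
    unfolding D_def derived_def
  proof (rule group.generate_subgroup_incl[OF GW _ F.subgroup_kernel])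
    show "derived_set W (carrier W) \<subseteq> kernel W V4 f"
    proof
      fix c assume "c \<in> derived_set W (carrier W)"
      then obtain h1 h2 where h: "h1 \<in> carrier W" "h2 \<in> carrier W"
        "c = h1 \<otimes>\<^bsub>W\<^esub> h2 \<otimes>\<^bsub>W\<^esub> inv\<^bsub>W\<^esub> h1 \<otimes>\<^bsub>W\<^esub> inv\<^bsub>W\<^esub> h2" by blast
      have "f c = f h1 \<otimes>\<^bsub>V4\<^esub> f h2 \<otimes>\<^bsub>V4\<^esub> f h1 \<otimes>\<^bsub>V4\<^esub> f h2"
        using h by (simp add: V4_inv)
      also have "\<dots> = \<one>\<^bsub>V4\<^esub>" by auto
      finally show "c \<in> kernel W V4 f" using h by (simp add: kernel_def)
    qed
  qed
  have const: "f (d \<otimes>\<^bsub>W\<^esub> a) = f a" if "d \<in> D" "a \<in> carrier W" for d a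
  proof -
    have "d \<in> carrier W" "f d = \<one>\<^bsub>V4\<^esub>" using Dker that by (auto simp: kernel_def)
    then show ?thesis using that by simp
  qed
  have card2: "card (rcosets\<^bsub>W\<^esub> D) = 2"
  proof -
    from ab obtain \<phi> where "\<phi> \<in> iso (W Mod D) (integer_mod_group 2)"
      unfolding is_iso_def WW abelianization_def D_def by blast
    then have "bij_betw \<phi> (carrier (W Mod D)) (carrier (integer_mod_group 2))" by (simp add: iso_def)
    then have "card (carrier (W Mod D)) = card (carrier (integer_mod_group 2))" by (rule bij_betw_same_card)
    then show ?thesis by (simp add: FactGroup_def carrier_integer_mod_group)
  qed
  then have finR: "finite (rcosets\<^bsub>W\<^esub> D)" by (intro card_ge_0_finite) simp
  have sub: "f ` carrier W \<subseteq> (\<lambda>K. f (SOME c. c \<in> K)) ` (rcosets\<^bsub>W\<^esub> D)"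
  proof
    fix v assume "v \<in> f ` carrier W"
    then obtain w where w: "w \<in> carrier W" "v = f w" by blast
    have K: "D #>\<^bsub>W\<^esub> w \<in> rcosets\<^bsub>W\<^esub> D" using w by (auto simp: RCOSETS_def)
    have wK: "w \<in> D #>\<^bsub>W\<^esub> w" by (rule group.rcos_self[OF GW w(1) Dsub])
    have fK: "f c = f w" if "c \<in> D #>\<^bsub>W\<^esub> w" for c
      using that const w by (auto simp: r_coset_def)
    have "(SOME c. c \<in> D #>\<^bsub>W\<^esub> w) \<in> D #>\<^bsub>W\<^esub> w" using wK by (rule someI)
    then have "f (SOME c. c \<in> D #>\<^bsub>W\<^esub> w) = v" using fK w by simp
    then show "v \<in> (\<lambda>K. f (SOME c. c \<in> K)) ` (rcosets\<^bsub>W\<^esub> D)" using K by force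
  qed
  have "card {(False,False),(True,False),(False,True),(True,True)} \<le> card (f ` carrier W)"
    by (rule card_mono[OF finite_subset[OF sub finite_imageI[OF finR]] img])
  also have "\<dots> \<le> card ((\<lambda>K. f (SOME c. c \<in> K)) ` (rcosets\<^bsub>W\<^esub> D))"
    by (rule card_mono[OF finite_imageI[OF finR] sub])
  also have "\<dots> \<le> 2" using card_image_le[OF finR] card2 by metis
  finally show False by simp
qed

lemma rtrancl_path:
  assumes "(x,y) \<in> Q\<^sup>*" "Q \<subseteq> S \<times> S" "y \<in> S"
  shows "\<exists>p. p \<noteq> [] \<and> hd p = x \<and> last p = y \<and> successively (\<lambda>a b. (a,b) \<in> Q) p \<and> set p \<subseteq> S"
  using assms(1)
proof (induction rule: converse_rtrancl_induct)
  case base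
  show ?case by (rule exI[of _ "[y]"]) (simp add: assms(3))
next
  case (step x z)
  then obtain p where p: "p \<noteq> []" "hd p = z" "last p = y" "successively (\<lambda>a b. (a,b) \<in> Q) p" "set p \<subseteq> S"
    by blast
  have "x \<in> S" using step.hyps(1) assms(2) by auto
  then show ?case using p step.hyps(1)
    by (intro exI[of _ "x # p"]) (auto simp: successively_Cons)
qed

lemma walk_join:
  assumes "p \<noteq> []" "q \<noteq> []" "last p = hd q" "successively P p" "successively P q"
  shows "successively P (p @ tl q) \<and> hd (p @ tl q) = hd p \<and> last (p @ tl q) = last q
     \<and> set (p @ tl q) = set p \<union> set q \<and> p @ tl q \<noteq> []"
proof -
  obtain h q' where q: "q = h # q'" using assms(2) by (cases q) auto
  have hl: "h = last p" using assms(3) q by simp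
  have sq: "successively P (h # q')" using assms(5) q by simp
  have s: "successively P (p @ q')"
  proof (cases "q' = []")
    case True then show ?thesis using assms(4) by simp
  next
    case False
    then have "P h (hd q')" "successively P q'" using sq by (auto simp: successively_Cons)
    then show ?thesis using assms(4) hl False by (simp add: successively_append_iff)
  qed
  have "set (p @ q') = set p \<union> set q"
    using q hl assms(1) by auto
  moreover have "last (p @ q') = last q" using q hl by auto
  ultimately show ?thesis using s q assms(1) by simp
qed

lemma cover_walk:
  assumes fin: "finite S" and x0: "x0 \<in> S" and OS: "Q \<subseteq> S \<times> S"
    and conn: "\<And>x y. x \<in> S \<Longrightarrow> y \<in> S \<Longrightarrow> (x,y) \<in> Q\<^sup>*"
  shows "\<exists>p. p \<noteq> [] \<and> successively (\<lambda>a b. (a,b) \<in> Q) p \<and> set p = S"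
proof -
  have "\<exists>p. p \<noteq> [] \<and> hd p = x0 \<and> last p = x0 \<and> successively (\<lambda>a b. (a,b) \<in> Q) p
          \<and> T \<subseteq> set p \<and> set p \<subseteq> S" if "finite T" "T \<subseteq> S" for T
    using that
  proof (induction T rule: finite_induct)
    case empty
    show ?case by (rule exI[of _ "[x0]"]) (simp add: x0)
  next
    case (insert t T)
    then obtain p where p: "p \<noteq> []" "hd p = x0" "last p = x0" "successively (\<lambda>a b. (a,b) \<in> Q) p"
      "T \<subseteq> set p" "set p \<subseteq> S" by blast
    have tS: "t \<in> S" using insert by simp
    obtain q where q: "q \<noteq> []" "hd q = x0" "last q = t" "successively (\<lambda>a b. (a,b) \<in> Q) q" "set q \<subseteq> S"
      using rtrancl_path[OF conn[OF x0 tS] OS tS] by blast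
    obtain r where r: "r \<noteq> []" "hd r = t" "last r = x0" "successively (\<lambda>a b. (a,b) \<in> Q) r" "set r \<subseteq> S"
      using rtrancl_path[OF conn[OF tS x0] OS x0] by blast
    have j1: "successively (\<lambda>a b. (a,b) \<in> Q) (p @ tl q) \<and> hd (p @ tl q) = hd p \<and> last (p @ tl q) = last q
     \<and> set (p @ tl q) = set p \<union> set q \<and> p @ tl q \<noteq> []"
      by (rule walk_join) (use p q in auto)
    define pq where "pq = p @ tl q"
    have j2: "successively (\<lambda>a b. (a,b) \<in> Q) (pq @ tl r) \<and> hd (pq @ tl r) = hd pq \<and> last (pq @ tl r) = last r
     \<and> set (pq @ tl r) = set pq \<union> set r \<and> pq @ tl r \<noteq> []"
      by (rule walk_join) (use j1 r q in \<open>auto simp: pq_def\<close>)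
    have "t \<in> set q" using q by (metis last_in_set)
    then show ?case using j1 j2 p q r
      by (intro exI[of _ "pq @ tl r"]) (auto simp: pq_def)
  qed
  from this[OF fin subset_refl] show ?thesis by blast
qed

context group begin

lemma pow_shift:
  assumes "a \<in> carrier G" "b \<in> carrier G"
  shows "(a \<otimes> b) [^] (k::nat) \<otimes> a = a \<otimes> (b \<otimes> a) [^] k"
proof (induction k)
  case 0 then show ?case using assms by simp
next
  case (Suc k)
  have "(a \<otimes> b) [^] Suc k \<otimes> a = ((a \<otimes> b) [^] k \<otimes> a) \<otimes> (b \<otimes> a)"
    using assms by (simp add: m_assoc)
  also have "\<dots> = a \<otimes> ((b \<otimes> a) [^] k \<otimes> (b \<otimes> a))"
    using assms Suc by (simp add: m_assoc)
  also have "\<dots> = a \<otimes> (b \<otimes> a) [^] Suc k" by simp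
  finally show ?case .
qed

lemma dihedral_conj:
  assumes a: "a \<in> carrier G" and b: "b \<in> carrier G"
    and aa: "a \<otimes> a = \<one>" and bb: "b \<otimes> b = \<one>"
    and m: "(a \<otimes> b) [^] (Suc (2 * k)) = \<one>"
  shows "a \<otimes> (b \<otimes> a) [^] k = (b \<otimes> a) [^] k \<otimes> b"
proof -
  define p where "p = (a \<otimes> b) [^] k"
  define q where "q = (b \<otimes> a) [^] k"
  have pc: "p \<in> carrier G" and qc: "q \<in> carrier G" using a b by (auto simp: p_def q_def)
  have ia: "inv a = a" using aa a by (simp add: inv_equality)
  have ib: "inv b = b" using bb b by (simp add: inv_equality)
  have iab: "inv (a \<otimes> b) = b \<otimes> a" using a b ia ib by (simp add: inv_mult_group)
  have qp: "q = inv p" unfolding p_def q_def using nat_pow_inv[of "a \<otimes> b" k] a b iab by simp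
  have "(a \<otimes> b) [^] (Suc (2 * k)) = p \<otimes> (a \<otimes> b) \<otimes> p"
  proof -
    have "Suc (2 * k) = k + (1 + k)" by simp
    then have "(a \<otimes> b) [^] (Suc (2 * k)) = (a \<otimes> b) [^] (k + (1 + k))" by (simp only:)
    also have "\<dots> = p \<otimes> ((a \<otimes> b) [^] (1::nat) \<otimes> p)" using a b
      by (simp only: p_def nat_pow_mult[symmetric] m_closed)
    also have "(a \<otimes> b) [^] (1::nat) = a \<otimes> b" using a b by simp
    finally show ?thesis using a b pc by (simp add: m_assoc)
  qed
  then have e: "p \<otimes> a \<otimes> (b \<otimes> p) = \<one>" using m a b pc by (simp add: m_assoc)
  have "p \<otimes> a = inv (b \<otimes> p)"
    using e a b pc by (metis inv_equality m_closed inv_inv inv_closed r_inv m_assoc one_closed)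
  also have "\<dots> = q \<otimes> b" using b pc ib qp by (simp add: inv_mult_group)
  finally have 1: "p \<otimes> a = q \<otimes> b" .
  have 2: "p \<otimes> a = a \<otimes> q" unfolding p_def q_def by (rule pow_shift[OF a b])
  show ?thesis using 1 2 unfolding q_def by simp
qed

end

definition lbl :: "nat \<Rightarrow> nat \<Rightarrow> nat \<Rightarrow> nat word" where
  "lbl n k i = concat (replicate k [(Suc i, 1), (i, 1)]) @ map (\<lambda>j. (j, 2)) [0..<n]"

definition path_edges :: "nat \<Rightarrow> (nat \<Rightarrow> nat) \<Rightarrow> lot_edge set" where
  "path_edges n K = (\<lambda>i. (i, lbl n (K i) i, Suc i)) ` {0..<n-1}"

lemma set_lbl: "set (lbl n k i) \<subseteq> {(Suc i, 1), (i, 1)} \<union> (\<lambda>j. (j, 2)) ` {0..<n}"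
  unfolding lbl_def by (auto simp: set_replicate_conv_if split: if_splits)

lemma set_lbl2: "j < n \<Longrightarrow> (j, 2) \<in> set (lbl n k i)"
  unfolding lbl_def by auto

lemma lbl_words: "Suc i < n \<Longrightarrow> lbl n k i \<in> words {0..<n}"
  using set_lbl[of n k i] unfolding words_def by force

lemma path_coxeter_type: "lot_coxeter_type (path_edges n K)"
  unfolding lot_coxeter_type_def path_edges_def
proof (clarify)
  fix i z k assume "(z, k) \<in> set (lbl n (K i) i)" "z \<noteq> i" "z \<noteq> Suc i"
  then show "even k" using set_lbl[of n "K i" i] by auto
qed

lemma path_adj:
  assumes "Suc i < n"
  shows "(i, Suc i) \<in> lot_adj (path_edges n K)" "(Suc i, i) \<in> lot_adj (path_edges n K)"
proof -
  have "(i, lbl n (K i) i, Suc i) \<in> path_edges n K" using assms unfolding path_edges_def by force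
  then show "(i, Suc i) \<in> lot_adj (path_edges n K)" "(Suc i, i) \<in> lot_adj (path_edges n K)"
    unfolding lot_adj_def by blast+
qed

lemma path_tree:
  assumes n: "n \<ge> 1"
  shows "is_tree {0..<n} (path_edges n K)"
proof -
  have fin: "finite (path_edges n K)" unfolding path_edges_def by simp
  have ends: "\<forall>(x, w, y)\<in>path_edges n K. x \<in> {0..<n} \<and> y \<in> {0..<n} \<and> x \<noteq> y"
    unfolding path_edges_def by auto
  have uniq: "\<forall>(x, w, y)\<in>path_edges n K. \<forall>(x', w', y')\<in>path_edges n K.
      {x, y} = {x', y'} \<longrightarrow> (x, w, y) = (x', w', y')"
    unfolding path_edges_def by (auto simp: doubleton_eq_iff)
  have reach: "(0, u) \<in> (lot_adj (path_edges n K))\<^sup>* \<and> (u, 0) \<in> (lot_adj (path_edges n K))\<^sup>*"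
    if "u < n" for u
    using that
  proof (induction u)
    case 0 then show ?case by simp
  next
    case (Suc u)
    then have "(0, u) \<in> (lot_adj (path_edges n K))\<^sup>*" "(u, 0) \<in> (lot_adj (path_edges n K))\<^sup>*" by auto
    then show ?case using path_adj[OF Suc.prems, of K]
      by (meson rtrancl_into_rtrancl converse_rtrancl_into_rtrancl)
  qed
  have conn: "\<forall>u\<in>{0..<n}. \<forall>v\<in>{0..<n}. (u, v) \<in> (lot_adj (path_edges n K))\<^sup>*"
    using reach by (meson atLeastLessThan_iff rtrancl_trans)
  have "inj_on (\<lambda>i. (i, lbl n (K i) i, Suc i)) {0..<n-1}" by (rule inj_onI) simp
  then have "card (path_edges n K) = n - 1" unfolding path_edges_def by (simp add: card_image)
  then have card: "card (path_edges n K) + 1 = card {0..<n}" using n by simp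
  show ?thesis unfolding is_tree_def using fin ends uniq conn card n by auto
qed

lemma path_LOT:
  assumes n: "n \<ge> 1"
  shows "is_LOT {0..<n} (path_edges n K)"
  unfolding is_LOT_def using path_tree[OF n]
  by (auto simp: path_edges_def intro!: lbl_words)

lemma path_prime:
  assumes n: "n \<ge> 1"
  shows "lot_prime {0..<n} (path_edges n K)"
  unfolding lot_prime_def
proof (intro allI impI)
  fix V' assume sub: "is_subLOT {0..<n} (path_edges n K) V'"
  then have V': "V' \<subseteq> {0..<n}" "is_tree V' (induced_edges (path_edges n K) V')"
    "\<forall>(x, w, y)\<in>induced_edges (path_edges n K) V'. w \<in> words V'"
    unfolding is_subLOT_def by auto
  show "V' = {0..<n} \<or> card V' = 1"
  proof (cases "card V' = 1")
    case True then show ?thesis by simp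
  next
    case False
    have "finite V'" "V' \<noteq> {}" "card (induced_edges (path_edges n K) V') + 1 = card V'"
      using V'(2) unfolding is_tree_def by auto
    then have "card (induced_edges (path_edges n K) V') \<noteq> 0" using False by auto
    then have "induced_edges (path_edges n K) V' \<noteq> {}" by (metis card.empty)
    then obtain x w y where e: "(x, w, y) \<in> induced_edges (path_edges n K) V'" by auto
    then have "w \<in> words V'" using V'(3) by blast
    moreover obtain i where "w = lbl n (K i) i" using e unfolding induced_edges_def path_edges_def by auto
    ultimately have "{0..<n} \<subseteq> V'" using set_lbl2[of _ n "K i" i] unfolding words_def by force
    then show ?thesis using V'(1) by auto
  qed
qed

lemma words_rep: "u \<in> words S \<Longrightarrow> concat (replicate k u) \<in> words S"
  by (induction k) auto

lemma cox_sq: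
  assumes z: "z \<in> S"
  shows "cls S (coxeter_relators S E m) [(z,1)] [^]\<^bsub>pres_group S (coxeter_relators S E m)\<^esub> (2::int)
       = \<one>\<^bsub>pres_group S (coxeter_relators S E m)\<^esub>"
proof -
  have w: "[(z,2::int)] \<in> words S" using z by (simp add: words_def)
  have r: "[(z,2::int)] \<in> coxeter_relators S E m" using z unfolding coxeter_relators_def by blast
  show ?thesis unfolding pres_gen_pow[OF z] one_pres
    by (rule cls_eqI, rule pres_cong.rel[OF r w])
qed

lemma cox_sq':
  assumes z: "z \<in> S"
  shows "cls S (coxeter_relators S E m) [(z,1)] \<otimes>\<^bsub>pres_group S (coxeter_relators S E m)\<^esub> cls S (coxeter_relators S E m) [(z,1)]
       = \<one>\<^bsub>pres_group S (coxeter_relators S E m)\<^esub>"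
proof -
  interpret P: group "pres_group S (coxeter_relators S E m)" by (rule group_pres)
  have c: "cls S (coxeter_relators S E m) [(z,1)] \<in> carrier (pres_group S (coxeter_relators S E m))"
    by (rule cls_in_carrier) (simp add: z words_def)
  have "cls S (coxeter_relators S E m) [(z,1)] [^]\<^bsub>pres_group S (coxeter_relators S E m)\<^esub> (2::int) =
     cls S (coxeter_relators S E m) [(z,1)] \<otimes>\<^bsub>pres_group S (coxeter_relators S E m)\<^esub> cls S (coxeter_relators S E m) [(z,1)]"
    using c by (simp add: int_pow_int[of _ _ 2, simplified] numeral_2_eq_2)
  then show ?thesis using cox_sq[OF z] by simp
qed

lemma cox_braid:
  assumes e: "e \<in> E" "e = {x, y}" and cg: "coxeter_graph S E m"
  shows "(cls S (coxeter_relators S E m) [(x,1)] \<otimes>\<^bsub>pres_group S (coxeter_relators S E m)\<^esub> cls S (coxeter_relators S E m) [(y,1)])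
     [^]\<^bsub>pres_group S (coxeter_relators S E m)\<^esub> (m e) = \<one>\<^bsub>pres_group S (coxeter_relators S E m)\<^esub>"
proof -
  define R where "R = coxeter_relators S E m"
  define W where "W = pres_group S R"
  interpret P: group W unfolding W_def by (rule group_pres)
  have xy: "x \<in> S" "y \<in> S" using e cg unfolding coxeter_graph_def by auto
  define r where "r = concat (replicate (m e) [(x,1::int),(y,1)])"
  have rR: "r \<in> R" unfolding r_def R_def coxeter_relators_def using e by blast
  have w2: "[(x,1::int),(y,1)] \<in> words S" using xy by (simp add: words_def)
  have rw: "r \<in> words S" unfolding r_def using w2 by (rule words_rep)
  have gS: "(\<lambda>z. cls S R [(z,1)]) ` S \<subseteq> carrier W"
    unfolding W_def by (auto intro!: cls_in_carrier simp: words_def)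
  have cx: "cls S R [(x,1)] \<in> carrier W" "cls S R [(y,1)] \<in> carrier W"
    using gS xy by auto
  have "evalw W (\<lambda>z. cls S R [(z,1)]) r = evalw W (\<lambda>z. cls S R [(z,1)]) [(x,1),(y,1)] [^]\<^bsub>W\<^esub> (m e)"
    unfolding r_def by (rule P.evalw_replicate[OF gS w2])
  also have "evalw W (\<lambda>z. cls S R [(z,1)]) [(x,1),(y,1)] = cls S R [(x,1)] \<otimes>\<^bsub>W\<^esub> cls S R [(y,1)]"
    using cx by (simp only: evalw.simps fst_conv snd_conv P.int_pow_1 P.r_one)
  finally have 1: "evalw W (\<lambda>z. cls S R [(z,1)]) r = (cls S R [(x,1)] \<otimes>\<^bsub>W\<^esub> cls S R [(y,1)]) [^]\<^bsub>W\<^esub> (m e)" .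
  have "evalw W (\<lambda>z. cls S R [(z,1)]) r = cls S R r" unfolding W_def by (rule evalw_gens[OF rw])
  also have "\<dots> = \<one>\<^bsub>W\<^esub>" unfolding W_def one_pres by (rule cls_eqI, rule pres_cong.rel[OF rR rw])
  finally show ?thesis using 1 unfolding W_def R_def by simp
qed

lemma main_nonempty:
  assumes cg: "coxeter_graph S E m"
    and ws: "ws \<noteq> []" "successively (\<lambda>a b. (a,b) \<in> oddrel E m) ws" "set ws = S"
  shows "\<exists>(V :: nat set) Ed. is_LOT V Ed \<and> lot_coxeter_type Ed \<and> lot_prime V Ed \<and>
           maps_onto (lot_group V Ed) (coxeter_group S E m)"
proof -
  define n where "n = length ws"
  have n1: "n \<ge> 1" using ws(1) by (simp add: n_def Suc_le_eq)
  define K where "K i = m {ws!i, ws!Suc i} div 2" for i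
  define Ed where "Ed = path_edges n K"
  define V where "V = {0..<n}"
  define R where "R = coxeter_relators S E m"
  define W where "W = pres_group S R"
  define RL where "RL = lot_relator ` Ed"
  interpret P: group W unfolding W_def by (rule group_pres)
  have wsS: "ws!i \<in> S" if "i < n" for i using that ws(3) nth_mem n_def by blast
  define gV where "gV i = cls S R [(ws!i,1)]" for i
  have gc: "gV i \<in> carrier W" if "i < n" for i
    unfolding gV_def W_def by (rule cls_in_carrier) (simp add: words_def wsS[OF that])
  have gVc: "gV ` V \<subseteq> carrier W" using gc by (auto simp: V_def)
  have sq: "gV i [^]\<^bsub>W\<^esub> (2::int) = \<one>\<^bsub>W\<^esub>" if "i < n" for i
    unfolding gV_def W_def R_def by (rule cox_sq[OF wsS[OF that]])
  have sq': "gV i \<otimes>\<^bsub>W\<^esub> gV i = \<one>\<^bsub>W\<^esub>" if "i < n" for i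
    unfolding gV_def W_def R_def by (rule cox_sq'[OF wsS[OF that]])
  have evsq: "evalw W gV (map (\<lambda>j. (j,2)) js) = \<one>\<^bsub>W\<^esub>" if "set js \<subseteq> V" for js
    using that
  proof (induction js)
    case Nil then show ?case by simp
  next
    case (Cons j js)
    then have j: "j < n" by (simp add: V_def)
    have "evalw W gV (map (\<lambda>j. (j,2)) (j # js)) = gV j [^]\<^bsub>W\<^esub> (2::int) \<otimes>\<^bsub>W\<^esub> evalw W gV (map (\<lambda>j. (j,2)) js)"
      by simp
    also have "\<dots> = \<one>\<^bsub>W\<^esub>" using Cons sq[OF j] by simp
    finally show ?case .
  qed
  have killed: "evalw W gV r = \<one>\<^bsub>W\<^esub>" if r: "r \<in> RL" "r \<in> words V" for r
  proof -
    obtain i where i: "i < n - 1" "r = lot_relator (i, lbl n (K i) i, Suc i)"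
      using r(1) unfolding RL_def Ed_def path_edges_def by auto
    have i1: "i < n" "Suc i < n" using i by auto
    define a where "a = gV i"
    define b where "b = gV (Suc i)"
    have ac: "a \<in> carrier W" and bc: "b \<in> carrier W" unfolding a_def b_def using gc i1 by auto
    have od: "(ws!i, ws!Suc i) \<in> oddrel E m"
      using successively_nth[OF ws(2)] i1 by (simp add: n_def)
    then have e: "{ws!i, ws!Suc i} \<in> E" and oe: "odd (m {ws!i, ws!Suc i})" by (auto simp: oddrel_def)
    have mK: "m {ws!i, ws!Suc i} = Suc (2 * K i)" using oe unfolding K_def by presburger
    have br: "(a \<otimes>\<^bsub>W\<^esub> b) [^]\<^bsub>W\<^esub> (Suc (2 * K i)) = \<one>\<^bsub>W\<^esub>"
      using cox_braid[OF e HOL.refl cg] unfolding mK a_def b_def gV_def W_def R_def .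
    have dc: "a \<otimes>\<^bsub>W\<^esub> (b \<otimes>\<^bsub>W\<^esub> a) [^]\<^bsub>W\<^esub> K i = (b \<otimes>\<^bsub>W\<^esub> a) [^]\<^bsub>W\<^esub> K i \<otimes>\<^bsub>W\<^esub> b"
      by (rule P.dihedral_conj[OF ac bc _ _ br]) (use sq' i1 in \<open>auto simp: a_def b_def\<close>)
    define Q where "Q = (b \<otimes>\<^bsub>W\<^esub> a) [^]\<^bsub>W\<^esub> K i"
    have Qc: "Q \<in> carrier W" unfolding Q_def using ac bc by simp
    have w1: "[(Suc i, 1::int), (i, 1)] \<in> words V" using i1 by (simp add: V_def words_def)
    have w2: "map (\<lambda>j. (j, 2::int)) [0..<n] \<in> words V" by (auto simp: V_def words_def)
    have wl: "lbl n (K i) i \<in> words V" unfolding V_def by (rule lbl_words[OF i1(2)])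
    have wi: "[(i, 1::int)] \<in> words V" "[(Suc i, 1::int)] \<in> words V" using i1 by (auto simp: V_def words_def)
    have "evalw W gV (lbl n (K i) i) =
        evalw W gV (concat (replicate (K i) [(Suc i, 1), (i, 1)])) \<otimes>\<^bsub>W\<^esub> evalw W gV (map (\<lambda>j. (j, 2)) [0..<n])"
      unfolding lbl_def by (rule P.evalw_append[OF gVc words_rep[OF w1] w2])
    also have "evalw W gV (map (\<lambda>j. (j, 2)) [0..<n]) = \<one>\<^bsub>W\<^esub>" by (rule evsq) (auto simp: V_def)
    also have "evalw W gV (concat (replicate (K i) [(Suc i, 1), (i, 1)])) =
        evalw W gV [(Suc i, 1), (i, 1)] [^]\<^bsub>W\<^esub> K i" by (rule P.evalw_replicate[OF gVc w1])
    also have "evalw W gV [(Suc i, 1), (i, 1)] = b \<otimes>\<^bsub>W\<^esub> a"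
      using ac bc by (simp add: a_def b_def)
    finally have el: "evalw W gV (lbl n (K i) i) = Q" using Qc by (simp add: Q_def)
    have ea: "evalw W gV [(i, 1)] = a" "evalw W gV [(Suc i, 1)] = b" using ac bc by (simp_all add: a_def b_def)
    define L where "L = lbl n (K i) i"
    have wL: "L \<in> words V" unfolding L_def by (rule wl)
    have wL1: "L @ [(Suc i, 1)] \<in> words V" using wL wi(2) by simp
    have wiL: "inv_word (L @ [(Suc i, 1)]) \<in> words V" using wL1 by simp
    have wrest: "L @ inv_word (L @ [(Suc i, 1)]) \<in> words V" using wL wiL by simp
    have r1: "r = [(i,1)] @ (L @ inv_word (L @ [(Suc i,1)]))"
      unfolding i(2) lot_relator_def L_def by simp
    have "evalw W gV r = evalw W gV [(i, 1)] \<otimes>\<^bsub>W\<^esub> evalw W gV (L @ inv_word (L @ [(Suc i,1)]))"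
      unfolding r1 by (rule P.evalw_append[OF gVc wi(1) wrest])
    also have "evalw W gV (L @ inv_word (L @ [(Suc i,1)])) =
        evalw W gV L \<otimes>\<^bsub>W\<^esub> evalw W gV (inv_word (L @ [(Suc i,1)]))"
      by (rule P.evalw_append[OF gVc wL wiL])
    also have "evalw W gV (inv_word (L @ [(Suc i,1)])) = inv\<^bsub>W\<^esub> (evalw W gV (L @ [(Suc i,1)]))"
      by (rule P.evalw_inv[OF gVc wL1])
    also have "evalw W gV (L @ [(Suc i,1)]) = evalw W gV L \<otimes>\<^bsub>W\<^esub> evalw W gV [(Suc i,1)]"
      by (rule P.evalw_append[OF gVc wL wi(2)])
    finally have "evalw W gV r = evalw W gV [(i, 1)] \<otimes>\<^bsub>W\<^esub> (evalw W gV (lbl n (K i) i) \<otimes>\<^bsub>W\<^esub>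
          inv\<^bsub>W\<^esub> (evalw W gV (lbl n (K i) i) \<otimes>\<^bsub>W\<^esub> evalw W gV [(Suc i, 1)]))"
      unfolding L_def .
    also have "\<dots> = a \<otimes>\<^bsub>W\<^esub> (Q \<otimes>\<^bsub>W\<^esub> inv\<^bsub>W\<^esub> (Q \<otimes>\<^bsub>W\<^esub> b))" unfolding ea el ..
    also have "\<dots> = (a \<otimes>\<^bsub>W\<^esub> Q) \<otimes>\<^bsub>W\<^esub> inv\<^bsub>W\<^esub> (Q \<otimes>\<^bsub>W\<^esub> b)"
      using ac bc Qc by (simp add: P.m_assoc)
    also have "\<dots> = \<one>\<^bsub>W\<^esub>" using dc ac bc Qc unfolding Q_def[symmetric] by simp
    finally show ?thesis .
  qed
  obtain h where h: "h \<in> hom (pres_group V RL) W"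
      and hc: "\<forall>a\<in>words V. h (cls V RL a) = evalw W gV a"
    using pres_univ[OF P.is_group gVc, of RL] killed by blast
  define idx where "idx z = (SOME i. i < n \<and> ws!i = z)" for z
  have idx: "idx z < n \<and> ws!(idx z) = z" if "z \<in> S" for z
  proof -
    have "\<exists>i. i < n \<and> ws!i = z" using that ws(3) by (auto simp: n_def in_set_conv_nth)
    then show ?thesis unfolding idx_def by (rule someI_ex)
  qed
  have surj: "h ` carrier (pres_group V RL) = carrier W"
  proof
    show "h ` carrier (pres_group V RL) \<subseteq> carrier W" using h by (auto simp: hom_def)
  next
    show "carrier W \<subseteq> h ` carrier (pres_group V RL)"
    proof
      fix A assume "A \<in> carrier W"
      then obtain w where w: "w \<in> words S" "A = cls S R w" unfolding W_def by (rule carrier_presE)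
      define v where "v = map (\<lambda>p. (idx (fst p), snd p)) w"
      have vw: "v \<in> words V" using w(1) idx unfolding v_def words_def V_def by auto
      have "h (cls V RL v) = evalw W gV v" using hc vw by simp
      also have "\<dots> = evalw W (gV \<circ> idx) w" unfolding v_def by (rule P.evalw_map)
      also have "\<dots> = evalw W (\<lambda>z. cls S R [(z,1)]) w"
        by (rule P.evalw_cong_fun[OF _ w(1)]) (simp add: gV_def idx)
      also have "\<dots> = A" unfolding w(2) W_def by (rule evalw_gens[OF w(1)])
      finally have "h (cls V RL v) = A" .
      moreover have "cls V RL v \<in> carrier (pres_group V RL)" by (rule cls_in_carrier[OF vw])
      ultimately show "A \<in> h ` carrier (pres_group V RL)" by blast
    qed
  qed
  have "maps_onto (lot_group V Ed) (coxeter_group S E m)"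
    unfolding maps_onto_def lot_group_def coxeter_group_def RL_def[symmetric] R_def[symmetric]
      W_def[symmetric] using h surj by blast
  then show ?thesis
    using path_LOT[OF n1, of K] path_coxeter_type[of n K] path_prime[OF n1, of K]
    unfolding V_def Ed_def by blast
qed

lemma main_empty:
  assumes S: "S = {}"
  shows "\<exists>(V :: nat set) Ed. is_LOT V Ed \<and> lot_coxeter_type Ed \<and> lot_prime V Ed \<and>
           maps_onto (lot_group V Ed) (coxeter_group S E m)"
proof -
  define R where "R = coxeter_relators S E m"
  define W where "W = pres_group S R"
  interpret P: group W unfolding W_def by (rule group_pres)
  have tree: "is_tree {0} {}" unfolding is_tree_def by simp
  have lot: "is_LOT {0} {}" unfolding is_LOT_def using tree by simp
  have cox: "lot_coxeter_type {}" unfolding lot_coxeter_type_def by simp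
  have prime: "lot_prime {0} {}" unfolding lot_prime_def is_subLOT_def is_tree_def
    by (auto simp: subset_singleton_iff)
  have gc: "(\<lambda>_. \<one>\<^bsub>W\<^esub>) ` {0::nat} \<subseteq> carrier W" by simp
  obtain h where h: "h \<in> hom (pres_group {0::nat} (lot_relator ` {})) W"
      and hc: "\<forall>a\<in>words {0}. h (cls {0} (lot_relator ` {}) a) = evalw W (\<lambda>_. \<one>\<^bsub>W\<^esub>) a"
    using pres_univ[OF P.is_group gc, of "lot_relator ` {}"] by auto
  have surj: "h ` carrier (pres_group {0::nat} (lot_relator ` {})) = carrier W"
  proof
    show "h ` carrier (pres_group {0::nat} (lot_relator ` {})) \<subseteq> carrier W" using h by (auto simp: hom_def)
  next
    show "carrier W \<subseteq> h ` carrier (pres_group {0::nat} (lot_relator ` {}))"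
    proof
      fix A assume "A \<in> carrier W"
      then obtain w where w: "w \<in> words S" "A = cls S R w" unfolding W_def by (rule carrier_presE)
      have "w = []" using w(1) S by (cases w) (auto simp: words_def)
      then have A: "A = \<one>\<^bsub>W\<^esub>" using w(2) by (simp add: W_def one_pres)
      have "h (cls {0} (lot_relator ` {}) []) = \<one>\<^bsub>W\<^esub>" using hc by simp
      moreover have "cls {0::nat} (lot_relator ` {}) [] \<in> carrier (pres_group {0::nat} (lot_relator ` {}))"
        by (rule cls_in_carrier) simp
      ultimately show "A \<in> h ` carrier (pres_group {0::nat} (lot_relator ` {}))" using A by force
    qed
  qed
  have "maps_onto (lot_group {0} {}) (coxeter_group S E m)"
    unfolding maps_onto_def lot_group_def coxeter_group_def R_def[symmetric] W_def[symmetric]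
    using h surj by blast
  then show ?thesis using lot cox prime by blast
qed

theorem theorem3p2:
  fixes S :: "'x set" and E :: "'x set set" and m :: "'x set \<Rightarrow> nat"
  assumes "coxeter_graph S E m"
    and "abelianization (coxeter_group S E m) \<cong> integer_mod_group 2"
  shows "\<exists>(V :: nat set) Ed. is_LOT V Ed \<and> lot_coxeter_type Ed \<and> lot_prime V Ed \<and>
           maps_onto (lot_group V Ed) (coxeter_group S E m)"
proof (cases "S = {}")
  case True
  then show ?thesis by (rule main_empty)
next
  case False
  then obtain x0 where x0: "x0 \<in> S" by blast
  have fin: "finite S" using assms(1) by (simp add: coxeter_graph_def)
  have OS: "oddrel E m \<subseteq> S \<times> S"
  proof
    fix p assume "p \<in> oddrel E m"
    then obtain x y where p: "p = (x,y)" "{x,y} \<in> E" by (auto simp: oddrel_def)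
    then have "{x,y} \<subseteq> S" using assms(1) by (auto simp: coxeter_graph_def)
    then show "p \<in> S \<times> S" using p by auto
  qed
  obtain ws where ws: "ws \<noteq> []" "successively (\<lambda>a b. (a,b) \<in> oddrel E m) ws" "set ws = S"
    using cover_walk[OF fin x0 OS odd_connected[OF assms]] by blast
  show ?thesis by (rule main_nonempty[OF assms(1) ws])
qed

end
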